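(* Let $n\ge 3$ be an integer and $r=\lceil \binom{n}{3}/\lfloor n/3\rfloor\rceil$. If $g\ge r$ is a positive integer and there exists an orthogonal array $\mathrm{OA}(3,n+2,g)$, then there exists a $\mathrm{TOC}_q(n,4,3)$ with $q=g+1$.
   Context: $\mathcal{H}_q(n,w)$ is the set of all words of length $n$ over $\mathbb{Z}_q$ with exactly $w$ nonzero entries, with the Hamming distance. An $(n,d,w)_q$-code is a nonempty subset of $\mathcal{H}_q(n,w)$ in which any two distinct words have Hamming distance at least $d$; $A_q(n,d,w)$ is the maximum size of such a code and a code of this size is optimal. A $\mathrm{TOC}_q(n,d,w)$ is a partition of $\mathcal{H}_q(n,w)$ into mutually disjoint optimal $(n,d,w)_q$-codes. An orthogonal array $\mathrm{OA}(t,k,s)$ is an $s^t\times k$ array over an $s$-symbol alphabet such that in every choice of $t$ columns each ordered $t$-tuple of symbols appears in exactly one row. *)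

theory Defs
  imports Main "HOL-Library.Disjoint_Sets" Complex_Main
begin

text \<open>Words of length n over Z_q are modelled as functions nat => nat that take values
  in {0..<q} and vanish outside the positions {0..<n}.\<close>

definition words :: "nat \<Rightarrow> nat \<Rightarrow> (nat \<Rightarrow> nat) set" where
  "words q n = {x. (\<forall>i<n. x i < q) \<and> (\<forall>i\<ge>n. x i = 0)}"

definition wt :: "nat \<Rightarrow> (nat \<Rightarrow> nat) \<Rightarrow> nat" where
  "wt n x = card {i. i < n \<and> x i \<noteq> 0}"

definition hdist :: "nat \<Rightarrow> (nat \<Rightarrow> nat) \<Rightarrow> (nat \<Rightarrow> nat) \<Rightarrow> nat" where
  "hdist n x y = card {i. i < n \<and> x i \<noteq> y i}"

definition Hq :: "nat \<Rightarrow> nat \<Rightarrow> nat \<Rightarrow> (nat \<Rightarrow> nat) set" where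
  "Hq q n w = {x \<in> words q n. wt n x = w}"

definition is_code :: "nat \<Rightarrow> nat \<Rightarrow> nat \<Rightarrow> nat \<Rightarrow> (nat \<Rightarrow> nat) set \<Rightarrow> bool" where
  "is_code q n d w C \<longleftrightarrow> C \<noteq> {} \<and> C \<subseteq> Hq q n w \<and>
     (\<forall>x\<in>C. \<forall>y\<in>C. x \<noteq> y \<longrightarrow> d \<le> hdist n x y)"

definition Aq :: "nat \<Rightarrow> nat \<Rightarrow> nat \<Rightarrow> nat \<Rightarrow> nat" where
  "Aq q n d w = Max {card C | C. is_code q n d w C}"

definition optimal_code :: "nat \<Rightarrow> nat \<Rightarrow> nat \<Rightarrow> nat \<Rightarrow> (nat \<Rightarrow> nat) set \<Rightarrow> bool" where
  "optimal_code q n d w C \<longleftrightarrow> is_code q n d w C \<and> card C = Aq q n d w"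

definition is_TOC :: "nat \<Rightarrow> nat \<Rightarrow> nat \<Rightarrow> nat \<Rightarrow> (nat \<Rightarrow> nat) set set \<Rightarrow> bool" where
  "is_TOC q n d w P \<longleftrightarrow> \<Union>P = Hq q n w \<and> disjoint P \<and> (\<forall>C\<in>P. optimal_code q n d w C)"

definition TOC_exists :: "nat \<Rightarrow> nat \<Rightarrow> nat \<Rightarrow> nat \<Rightarrow> bool" where
  "TOC_exists q n d w \<longleftrightarrow> (\<exists>P. is_TOC q n d w P)"

definition is_OA :: "nat \<Rightarrow> nat \<Rightarrow> nat \<Rightarrow> (nat \<Rightarrow> nat \<Rightarrow> nat) \<Rightarrow> bool" where
  "is_OA t k s M \<longleftrightarrow>
     (\<forall>r < s ^ t. \<forall>c < k. M r c < s) \<and>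
     (\<forall>cols :: nat \<Rightarrow> nat. inj_on cols {..<t} \<and> (\<forall>i<t. cols i < k) \<longrightarrow>
        (\<forall>sym :: nat \<Rightarrow> nat. (\<forall>i<t. sym i < s) \<longrightarrow>
           (\<exists>!r. r < s ^ t \<and> (\<forall>i<t. M r (cols i) = sym i))))"

definition OA_exists :: "nat \<Rightarrow> nat \<Rightarrow> nat \<Rightarrow> bool" where
  "OA_exists t k s \<longleftrightarrow> (\<exists>M. is_OA t k s M)"

end

theory Submission
  imports Defs
begin

definition sw :: "(nat \<Rightarrow> nat \<Rightarrow> nat) \<Rightarrow> nat \<Rightarrow> nat \<Rightarrow> nat set \<Rightarrow> nat \<Rightarrow> nat" where
  "sw M g r T = (\<lambda>i. if i \<in> T then (M r i + \<Sum>T) mod g + 1 else 0)"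

definition trip :: "nat \<Rightarrow> nat set set" where
  "trip n = {T. T \<subseteq> {..<n} \<and> card T = 3}"

lemma mod_cancel_lt:
  fixes a b c g :: nat
  assumes "(a + c) mod g = (b + c) mod g" "a < g" "b < g"
  shows "a = b"
proof -
  have "(int a + int c) mod int g = (int b + int c) mod int g"
    using assms(1) by (metis of_nat_add zmod_int)
  then have "(int a + int c - int c) mod int g = (int b + int c - int c) mod int g"
    by (rule mod_diff_cong) (rule refl)
  then have "int a mod int g = int b mod int g" by (simp only: add_diff_cancel_right')
  then have "int (a mod g) = int (b mod g)" by (simp only: zmod_int)
  then have "a mod g = b mod g" by (simp only: of_nat_eq_iff)
  then show ?thesis using assms(2,3) by (simp only: mod_less)
qed

lemma trip_finite: "T \<in> trip n \<Longrightarrow> finite T"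
  unfolding trip_def using finite_subset by auto

lemma sw_supp:
  assumes "0 < g"
  shows "{i. sw M g r T i \<noteq> 0} = T"
  by (auto simp: sw_def)

lemma sw_supp_n:
  assumes "T \<in> trip n"
  shows "{i. i < n \<and> sw M g r T i \<noteq> 0} = T"
  using assms by (auto simp: sw_def trip_def)

lemma sw_Hq:
  assumes "T \<in> trip n" "0 < g"
  shows "sw M g r T \<in> Hq (g + 1) n 3"
proof -
  have "sw M g r T i < g + 1" for i
    using mod_less_divisor[OF assms(2)] by (simp add: sw_def)
  moreover have "sw M g r T i = 0" if "n \<le> i" for i
  proof -
    have "i \<notin> T" using assms(1) that by (auto simp: trip_def)
    then show ?thesis by (simp add: sw_def)
  qed
  ultimately have "sw M g r T \<in> words (g+1) n"
    unfolding words_def by blast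
  moreover have "wt n (sw M g r T) = 3"
    unfolding wt_def sw_supp_n[OF assms(1)] using assms(1) by (simp add: trip_def)
  ultimately show ?thesis unfolding Hq_def by blast
qed

lemma trip_fin: "finite (trip n)"
proof -
  have "trip n \<subseteq> Pow {..<n}" unfolding trip_def by blast
  then show ?thesis by (rule finite_subset) simp
qed

lemma trip_card: "card (trip n) = n choose 3"
  unfolding trip_def using n_subsets[of "{..<n}" 3] by simp

lemma code_bound:
  assumes "is_code q n 4 3 C"
  shows "card C \<le> n choose 3"
proof -
  let ?phi = "\<lambda>x. {i. i < n \<and> x i \<noteq> 0}"
  have sub: "?phi ` C \<subseteq> trip n"
    using assms by (auto simp: is_code_def Hq_def wt_def trip_def)
  have "inj_on ?phi C"
  proof (rule inj_onI, rule ccontr)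
    fix x y assume xy: "x \<in> C" "y \<in> C" "?phi x = ?phi y" "x \<noteq> y"
    then have "4 \<le> hdist n x y" using assms by (auto simp: is_code_def)
    moreover have "{i. i < n \<and> x i \<noteq> y i} \<subseteq> ?phi x"
    proof
      fix i assume i: "i \<in> {i. i < n \<and> x i \<noteq> y i}"
      show "i \<in> ?phi x"
      proof (cases "x i = 0")
        case True
        then have "i \<in> ?phi y" using i by simp
        then have "i \<in> ?phi x" using xy(3) by simp
        then show ?thesis by simp
      next
        case False then show ?thesis using i by simp
      qed
    qed
    moreover have "card (?phi x) = 3"
    proof -
      have "x \<in> Hq q n 3" using xy(1) assms unfolding is_code_def by blast
      then show ?thesis unfolding Hq_def wt_def by simp
    qed
    moreover have "finite (?phi x)" by simp
    ultimately have "card {i. i < n \<and> x i \<noteq> y i} \<le> 3"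
      using card_mono[of "?phi x" "{i. i < n \<and> x i \<noteq> y i}"] by linarith
    then show False using \<open>4 \<le> hdist n x y\<close> unfolding hdist_def by linarith
  qed
  then have "card C \<le> card (trip n)"
    using card_inj_on_le[OF _ sub trip_fin] by blast
  then show ?thesis by (simp add: trip_card)
qed

lemma sw_dist:
  assumes T: "T \<in> trip n" and T': "T' \<in> trip n" and ne: "T \<noteq> T'" and g: "0 < g"
    and gn: "4 \<le> n \<Longrightarrow> n \<le> g"
  shows "4 \<le> hdist n (sw M g r T) (sw M g r T')"
proof -
  let ?x = "sw M g r T" and ?y = "sw M g r T'"
  let ?D = "{i. i < n \<and> ?x i \<noteq> ?y i}"
  have fD: "finite ?D" by simp
  have fT: "finite T" "finite T'" using T T' trip_finite by auto
  have c3: "card T = 3" "card T' = 3" using T T' by (auto simp: trip_def)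
  have sub: "T \<subseteq> {..<n}" "T' \<subseteq> {..<n}" using T T' by (auto simp: trip_def)
  have d1: "T - T' \<subseteq> ?D" using sub by (auto simp: sw_def)
  have d2: "T' - T \<subseteq> ?D" using sub by (auto simp: sw_def)
  have cI: "card (T \<inter> T') \<le> 2"
  proof (rule ccontr)
    assume "\<not> ?thesis"
    then have "card (T \<inter> T') = card T" using card_mono[OF fT(1), of "T \<inter> T'"] c3 by auto
    then have "T \<inter> T' = T" using card_subset_eq[OF fT(1)] by blast
    moreover have "card (T \<inter> T') = card T'" using \<open>card (T \<inter> T') = card T\<close> c3 by simp
    then have "T \<inter> T' = T'" using card_subset_eq[OF fT(2)] by blast
    ultimately show False using ne by simp
  qed
  have cD1: "card (T - T') = 3 - card (T \<inter> T')" using card_Diff_subset_Int[of T T'] fT c3 by simp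
  have cD2: "card (T' - T) = 3 - card (T \<inter> T')"
    using card_Diff_subset_Int[of T' T] fT c3 by (simp add: Int_commute)
  show ?thesis
  proof (cases "card (T \<inter> T') \<le> 1")
    case True
    have "card ((T - T') \<union> (T' - T)) = card (T - T') + card (T' - T)"
      by (rule card_Un_disjoint) (use fT in auto)
    also have "\<dots> \<ge> 4" using True cD1 cD2 by simp
    finally have "4 \<le> card ((T - T') \<union> (T' - T))" .
    moreover have "card ((T - T') \<union> (T' - T)) \<le> card ?D"
      by (rule card_mono[OF fD]) (use d1 d2 in auto)
    ultimately show ?thesis unfolding hdist_def by simp
  next
    case False
    then have c2: "card (T \<inter> T') = 2" using cI by simp
    have "card (T - T') = 1" "card (T' - T) = 1" using cD1 cD2 c2 by simp_all
    then obtain k k' where k: "T - T' = {k}" and k': "T' - T = {k'}" by (meson card_1_singletonE)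
    let ?I = "T \<inter> T'"
    have TI: "T = insert k ?I" "k \<notin> ?I" using k by blast+
    have TI': "T' = insert k' ?I" "k' \<notin> ?I" using k' by blast+
    have kk: "k \<noteq> k'" using k k' by blast
    have fI: "finite ?I" using fT by auto
    have sT: "\<Sum>T = k + \<Sum>?I" using arg_cong[OF TI(1), of "\<lambda>A. \<Sum>A"] sum.insert[OF fI TI(2), of "\<lambda>x. x"] by (rule trans)
    have sT': "\<Sum>T' = k' + \<Sum>?I" using arg_cong[OF TI'(1), of "\<lambda>A. \<Sum>A"] sum.insert[OF fI TI'(2), of "\<lambda>x. x"] by (rule trans)
    have U: "T \<union> T' = insert k (insert k' ?I)" using k k' by blast
    have cU: "card (T \<union> T') = 4" unfolding U
    proof -
      have "card (insert k' ?I) = 3" using TI'(2) fI c2 by simp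
      moreover have "k \<notin> insert k' ?I" using TI(2) kk by simp
      ultimately show "card (insert k (insert k' ?I)) = 4" using fI by simp
    qed
    have "T \<union> T' \<subseteq> {..<n}" using sub by blast
    then have "card (T \<union> T') \<le> card {..<n}" by (rule card_mono[rotated]) simp
    then have "card (T \<union> T') \<le> n" by simp
    then have "n \<le> g" using gn cU by simp
    have "k \<in> T" "k' \<in> T'" using k k' by blast+
    then have kn: "k < g" "k' < g" using sub \<open>n \<le> g\<close> by auto
    have "T \<union> T' \<subseteq> ?D"
    proof
      fix i assume i: "i \<in> T \<union> T'"
      show "i \<in> ?D"
      proof (cases "i \<in> ?I")
        case False then show ?thesis using i d1 d2 by auto
      next
        case True
        have "?x i \<noteq> ?y i"
        proof
          assume "?x i = ?y i"
          then have "(M r i + \<Sum>T) mod g = (M r i + \<Sum>T') mod g" using True by (simp add: sw_def)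
          moreover have e1: "M r i + \<Sum>T = k + (M r i + \<Sum>?I)" using sT by linarith
          moreover have e2: "M r i + \<Sum>T' = k' + (M r i + \<Sum>?I)" using sT' by linarith
          ultimately have "(k + (M r i + \<Sum>?I)) mod g = (k' + (M r i + \<Sum>?I)) mod g"
            by metis
          then have "k = k'" by (rule mod_cancel_lt[OF _ kn])
          then show False using kk by simp
        qed
        then show ?thesis using True sub by auto
      qed
    qed
    then have "card (T \<union> T') \<le> card ?D" by (rule card_mono[OF fD])
    then show ?thesis unfolding hdist_def using cU by simp
  qed
qed

lemma sw_inj:
  assumes "0 < g"
  shows "inj_on (sw M g r) A"
proof (rule inj_onI)
  fix T T' assume "sw M g r T = sw M g r T'"
  then have "{i. sw M g r T i \<noteq> 0} = {i. sw M g r T' i \<noteq> 0}" by simp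
  then show "T = T'" unfolding sw_supp[OF assms] .
qed

lemma card_code:
  assumes "0 < g"
  shows "card (sw M g r ` trip n) = n choose 3"
proof -
  have "card (sw M g r ` trip n) = card (trip n)" by (rule card_image[OF sw_inj[OF assms]])
  then show ?thesis by (simp only: trip_card)
qed

lemma mod_arith:
  fixes a s g :: nat
  assumes "a < g"
  shows "((a + g - s mod g) mod g + s) mod g = a"
proof -
  define m where "m = s mod g"
  define q where "q = s div g"
  have e: "s = m + g * q" unfolding m_def q_def by simp
  have mg: "m \<le> g" unfolding m_def using assms by (simp add: less_imp_le_nat)
  have "((a + g - s mod g) mod g + s) mod g = (a + g - s mod g + s) mod g" by (simp add: mod_add_left_eq)
  also have "a + g - s mod g + s = a + g * (1 + q)"
    unfolding m_def[symmetric] using e mg by (simp add: algebra_simps)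
  also have "(a + g * (1 + q)) mod g = a mod g" by (rule mod_mult_self2)
  also have "a mod g = a" using assms by (rule mod_less)
  finally show ?thesis .
qed

lemma choose3: "6 * (n choose 3) = n * (n - 1) * (n - 2)"
proof (cases "n \<ge> 3")
  case True
  then obtain m where m: "n = m + 3" by (metis add.commute le_Suc_ex)
  have "fact 3 * fact m * (n choose 3) = (fact n :: nat)"
    using binomial_fact_lemma[of 3 n] True m by simp
  also have "fact n = (m+3) * (m+2) * (m+1) * (fact m :: nat)" unfolding m
    by (simp add: fact_Suc algebra_simps numeral_eq_Suc)
  finally have "6 * (n choose 3) * fact m = (m+3) * (m+2) * (m+1) * (fact m :: nat)"
    by (simp add: fact_numeral algebra_simps)
  then have "6 * (n choose 3) = (m+3) * (m+2) * (m+1)" by simp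
  then show ?thesis using m by simp
next
  case False
  then have "n < 3" by simp
  then have "n = 0 \<or> n = 1 \<or> n = 2" by auto
  then show ?thesis by auto
qed

lemma g_ge_n:
  fixes n g :: nat
  assumes "n \<ge> 4" "0 < g"
    and "real g \<ge> real_of_int \<lceil>real (n choose 3) / real (n div 3)\<rceil>"
  shows "n \<le> g"
proof (rule ccontr)
  assume "\<not> n \<le> g"
  then have gl: "g \<le> n - 1" by simp
  let ?d = "n div 3" and ?C = "n choose 3"
  have d0: "0 < ?d" using assms by simp
  have "real ?C / real ?d \<le> real g" using assms(3) le_of_int_ceiling order_trans by blast
  then have "real ?C \<le> real g * real ?d" using d0 by (simp add: divide_le_eq)
  then have Cg: "?C \<le> g * ?d" by (metis of_nat_le_iff of_nat_mult)
  have d3: "3 * ?d \<le> n" by simp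
  have "n * (n - 1) * (n - 2) = 6 * ?C" by (simp add: choose3)
  also have "\<dots> \<le> 6 * (g * ?d)" using Cg by simp
  also have "\<dots> \<le> 6 * ((n - 1) * ?d)" using gl by simp
  also have "\<dots> = 2 * (n - 1) * (3 * ?d)" by simp
  also have "\<dots> \<le> 2 * (n - 1) * n" using d3 by simp
  finally have "n * (n - 1) * (n - 2) \<le> n * (n - 1) * 2" by (simp add: algebra_simps)
  moreover have "0 < n * (n - 1)" using assms(1) by simp
  ultimately have "n - 2 \<le> 2" using mult_le_cancel1[of "n * (n - 1)" "n - 2" 2] by blast
  then have "n = 4" using assms(1) by simp
  then have "6 * ?C = 24" using choose3[of n] by simp
  then have C4: "?C = 4" by simp
  have d1: "?d = 1" using \<open>n = 4\<close> by simp
  have "g \<le> 3" using gl \<open>n = 4\<close> by simp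
  then show False using Cg C4 d1 by simp
qed

lemma OA_bij:
  fixes f :: "nat \<Rightarrow> nat"
  assumes "bij_betw f {0..<3} T" "T \<in> trip n"
  shows "inj_on f {..<3}" "\<And>i. i < 3 \<Longrightarrow> f i < n + 2" "\<And>i. i < 3 \<Longrightarrow> f i \<in> T"
    "\<And>t. t \<in> T \<Longrightarrow> \<exists>j<3. f j = t"
proof -
  show "inj_on f {..<3}" using assms(1) by (simp add: bij_betw_def lessThan_atLeast0)
  show "\<And>i. i < 3 \<Longrightarrow> f i \<in> T" using assms(1) by (auto simp: bij_betw_def)
  then show "\<And>i. i < 3 \<Longrightarrow> f i < n + 2" using assms(2) by (force simp: trip_def)
  show "\<And>t. t \<in> T \<Longrightarrow> \<exists>j<3. f j = t" using assms(1)
    by (metis atLeastLessThan_iff bij_betw_iff_bijections)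
qed

lemma OA_range:
  assumes "is_OA t k s M" "r < s ^ t" "c < k"
  shows "M r c < s"
  using assms unfolding is_OA_def by blast

lemma OA_ex1:
  assumes "is_OA t k s M" "inj_on cols {..<t}" "\<forall>i<t. cols i < k" "\<forall>i<t. sy i < s"
  shows "\<exists>!r. r < s ^ t \<and> (\<forall>i<t. M r (cols i) = sy i)"
proof -
  have "\<forall>cols :: nat \<Rightarrow> nat. inj_on cols {..<t} \<and> (\<forall>i<t. cols i < k) \<longrightarrow>
        (\<forall>sy :: nat \<Rightarrow> nat. (\<forall>i<t. sy i < s) \<longrightarrow>
           (\<exists>!r. r < s ^ t \<and> (\<forall>i<t. M r (cols i) = sy i)))"
    using assms(1) unfolding is_OA_def by (rule conjunct2)
  then show ?thesis using assms(2,3,4) by blast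
qed

lemma Hq_props:
  assumes "x \<in> Hq q n w"
  shows "\<And>i. i < n \<Longrightarrow> x i < q" "\<And>i. n \<le> i \<Longrightarrow> x i = 0" "card {i. i < n \<and> x i \<noteq> 0} = w"
  using assms unfolding Hq_def words_def wt_def by auto

lemma cover:
  assumes OA: "is_OA 3 (n + 2) g M" and g: "0 < g" and x: "x \<in> Hq (g + 1) n 3"
  shows "\<exists>r<g^3. \<exists>T\<in>trip n. x = sw M g r T"
proof -
  define T where "T = {i. i < n \<and> x i \<noteq> 0}"
  have cT: "card T = 3" unfolding T_def by (rule Hq_props(3)[OF x])
  have Tn: "T \<in> trip n" unfolding trip_def using cT by (auto simp: T_def)
  have fT: "finite T" using Tn trip_finite by blast
  obtain f :: "nat \<Rightarrow> nat" where f: "bij_betw f {0..<3} T"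
    using ex_bij_betw_nat_finite[OF fT] unfolding cT by blast
  note fb = OA_bij[OF f Tn]
  define S where "S = \<Sum>T"
  define sy where "sy = (\<lambda>j. (x (f j) - 1 + g - S mod g) mod g)"
  have "\<forall>j<3. sy j < g" using g by (simp add: sy_def)
  moreover have F: "\<forall>i<3. f i < n + 2" using fb(2) by blast
  ultimately have "\<exists>!r. r < g ^ 3 \<and> (\<forall>i<3. M r (f i) = sy i)"
    using OA_ex1[OF OA fb(1)] by blast
  then obtain r where r: "r < g^3" "\<forall>j<3. M r (f j) = sy j" by blast
  have "x = sw M g r T"
  proof
    fix i
    show "x i = sw M g r T i"
    proof (cases "i \<in> T")
      case True
      then obtain j where j: "j < 3" "f j = i" using fb(4) by blast
      have iT: "i < n" "x i \<noteq> 0" using True unfolding T_def by auto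
      have xi: "x i - 1 < g" using Hq_props(1)[OF x iT(1)] iT(2) by linarith
      have Mi: "M r i = sy j" using r(2) j by blast
      have "sw M g r T i = (M r i + S) mod g + 1" using True by (simp add: sw_def S_def)
      also have "(M r i + S) mod g = x i - 1"
        unfolding Mi sy_def j(2) by (rule mod_arith[OF xi])
      finally show ?thesis using iT(2) by simp
    next
      case False
      have "x i = 0"
      proof (cases "i < n")
        case True then show ?thesis using False unfolding T_def by blast
      next
        case False then show ?thesis using Hq_props(2)[OF x] by simp
      qed
      then show ?thesis using False by (simp add: sw_def)
    qed
  qed
  then show ?thesis using r Tn by blast
qed

lemma uniq:
  assumes OA: "is_OA 3 (n + 2) g M" and g: "0 < g"
    and r: "r < g^3" "r' < g^3" and T: "T \<in> trip n" "T' \<in> trip n"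
    and eq: "sw M g r T = sw M g r' T'"
  shows "r = r'"
proof -
  have "{i. sw M g r T i \<noteq> 0} = {i. sw M g r' T' i \<noteq> 0}" using eq by simp
  then have TT: "T = T'" unfolding sw_supp[OF g] .
  have fT: "finite T" using T(1) trip_finite by blast
  have cT: "card T = 3" using T(1) by (simp add: trip_def)
  obtain f :: "nat \<Rightarrow> nat" where f: "bij_betw f {0..<3} T"
    using ex_bij_betw_nat_finite[OF fT] unfolding cT by blast
  note fb = OA_bij[OF f T(1)]
  have A: "\<forall>j<3. M r' (f j) = M r (f j)"
  proof (intro allI impI)
    fix j :: nat assume j: "j < 3"
    have fj: "f j \<in> T" by (rule fb(3)[OF j])
    have "sw M g r T (f j) = sw M g r' T (f j)" using eq TT by simp
    then have "(M r (f j) + \<Sum>T) mod g = (M r' (f j) + \<Sum>T) mod g"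
      using fj by (simp add: sw_def)
    moreover have "M r (f j) < g" by (rule OA_range[OF OA r(1) fb(2)[OF j]])
    moreover have "M r' (f j) < g" by (rule OA_range[OF OA r(2) fb(2)[OF j]])
    ultimately show "M r' (f j) = M r (f j)" using mod_cancel_lt by metis
  qed
  have B: "\<forall>j<3. M r (f j) < g" using OA_range[OF OA r(1)] fb(2) by blast
  have F: "\<forall>i<3. f i < n + 2" using fb(2) by blast
  have "\<exists>!s. s < g^3 \<and> (\<forall>i<3. M s (f i) = M r (f i))"
    by (rule OA_ex1[OF OA fb(1) F B])
  then show ?thesis using r A by blast
qed

theorem proposition4p7:
  fixes n g :: nat
  assumes "n \<ge> 3"
    and "0 < g"
    and "real g \<ge> real_of_int \<lceil>real (n choose 3) / real (n div 3)\<rceil>"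
    and "OA_exists 3 (n + 2) g"
  shows "TOC_exists (g + 1) n 4 3"
proof -
  obtain M where OA: "is_OA 3 (n + 2) g M" using assms(4) by (auto simp: OA_exists_def)
  have g: "0 < g" by fact
  have gn: "4 \<le> n \<Longrightarrow> n \<le> g" using g_ge_n assms(2,3) by blast
  define P where "P = (\<lambda>r. sw M g r ` trip n) ` {..<g^3}"
  have codeC: "is_code (g + 1) n 4 3 (sw M g r ` trip n)" for r
  proof -
    have "{0,1,2} \<in> trip n" using assms(1) by (auto simp: trip_def)
    then have "sw M g r ` trip n \<noteq> {}" by blast
    moreover have "sw M g r ` trip n \<subseteq> Hq (g + 1) n 3" using sw_Hq g by blast
    moreover have "\<forall>x\<in>sw M g r ` trip n. \<forall>y\<in>sw M g r ` trip n. x \<noteq> y \<longrightarrow> 4 \<le> hdist n x y"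
      using sw_dist[OF _ _ _ g gn] by blast
    ultimately show ?thesis by (simp add: is_code_def)
  qed
  have Aq: "Aq (g + 1) n 4 3 = n choose 3"
  proof -
    let ?S = "{card C | C. is_code (g + 1) n 4 3 C}"
    have "?S \<subseteq> {..n choose 3}" using code_bound by auto
    then have "finite ?S" using finite_subset by blast
    moreover have "n choose 3 \<in> ?S" using codeC[of 0] card_code[OF g, of M 0 n] by (metis (mono_tags, lifting) mem_Collect_eq)
    ultimately show ?thesis unfolding Aq_def using code_bound
      by (intro Max_eqI) auto
  qed
  have "is_TOC (g + 1) n 4 3 P"
    unfolding is_TOC_def
  proof (intro conjI)
    show "\<Union>P = Hq (g + 1) n 3"
    proof
      show "\<Union>P \<subseteq> Hq (g + 1) n 3" unfolding P_def using sw_Hq g by blast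
      show "Hq (g + 1) n 3 \<subseteq> \<Union>P"
      proof
        fix x assume "x \<in> Hq (g + 1) n 3"
        then obtain r T where "r < g^3" "T \<in> trip n" "x = sw M g r T" using cover[OF OA g] by blast
        then show "x \<in> \<Union>P" unfolding P_def by blast
      qed
    qed
    show "disjoint P"
      unfolding disjoint_def P_def
    proof (intro ballI impI)
      fix A B assume A: "A \<in> (\<lambda>r. sw M g r ` trip n) ` {..<g^3}"
        and B: "B \<in> (\<lambda>r. sw M g r ` trip n) ` {..<g^3}" and ne: "A \<noteq> B"
      obtain r where r: "r < g^3" "A = sw M g r ` trip n" using A by blast
      obtain r' where r': "r' < g^3" "B = sw M g r' ` trip n" using B by blast
      show "A \<inter> B = {}"
      proof (rule ccontr)
        assume "A \<inter> B \<noteq> {}"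
        then obtain T T' where "T \<in> trip n" "T' \<in> trip n" "sw M g r T = sw M g r' T'"
          using r r' by auto
        then have "r = r'" using uniq[OF OA g r(1) r'(1)] by blast
        then show False using ne r r' by simp
      qed
    qed
    show "\<forall>C\<in>P. optimal_code (g + 1) n 4 3 C"
      unfolding P_def optimal_code_def using codeC card_code[OF g] Aq by auto
  qed
  then show ?thesis unfolding TOC_exists_def by blast
qed

end
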